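(* Let $n$ be an odd prime and let $k_1,k_2\in\mathbb{Z}$ be such that $\sin\big(\frac{k_2\pi}{n}\big)\neq0$. Then $$\frac{\sin\big(\frac{k_1\pi}{n}\big)}{\sin\big(\frac{k_2\pi}{n}\big)}$$ is either $-1$, $0$, $1$, or irrational. *)

theory Defs
  imports "HOL-Analysis.Analysis"
begin

end

theory Submission imports Defs "Berlekamp_Zassenhaus.Factor_Bound" begin
lemma eis_aux:
  fixes F G H :: "int poly" and q :: int
  assumes q: "prime q" and FGH: "F = G * H"
    and g0: "q dvd poly.coeff G 0" and h0: "\<not> q dvd poly.coeff H 0"
    and lg: "\<not> q dvd lead_coeff G"
    and dF: "degree G < degree F"
    and cF: "\<forall>k < degree F. q dvd poly.coeff F k"
  shows False
proof -
  define i where "i = (LEAST i. \<not> q dvd poly.coeff G i)"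
  have ex: "\<not> q dvd poly.coeff G (degree G)" using lg by simp
  hence i1: "\<not> q dvd poly.coeff G i" unfolding i_def by (rule LeastI)
  have i2: "i \<le> degree G" using ex unfolding i_def by (rule Least_le)
  have below: "\<And>j. j < i \<Longrightarrow> q dvd poly.coeff G j" using not_less_Least i_def by blast
  have "poly.coeff F i = (\<Sum>j\<le>i. poly.coeff G j * poly.coeff H (i - j))"
    unfolding FGH coeff_mult by simp
  also have "\<dots> = (\<Sum>j<i. poly.coeff G j * poly.coeff H (i - j)) + poly.coeff G i * poly.coeff H 0"
    by (simp add: lessThan_Suc_atMost[symmetric])
  finally have eq: "poly.coeff F i = (\<Sum>j<i. poly.coeff G j * poly.coeff H (i - j)) + poly.coeff G i * poly.coeff H 0" .
  have d1: "q dvd (\<Sum>j<i. poly.coeff G j * poly.coeff H (i - j))"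
    by (intro dvd_sum) (simp add: below)
  have d2: "q dvd poly.coeff F i" using cF i2 dF by simp
  have "q dvd poly.coeff G i * poly.coeff H 0"
    using d1 d2 eq by (metis dvd_add_right_iff)
  thus False using q i1 h0 by (simp add: prime_dvd_mult_iff)
qed

lemma eis:
  fixes F G H :: "int poly" and q :: int
  assumes q: "prime q" and FGH: "F = G * H"
    and c0: "poly.coeff F 0 = q" and lF: "lead_coeff F = 1"
    and cF: "\<forall>k < degree F. q dvd poly.coeff F k"
    and dG: "degree G \<ge> 1" and dH: "degree H \<ge> 1"
  shows False
proof -
  have nz: "G \<noteq> 0" "H \<noteq> 0" using dG dH by auto
  have dF: "degree F = degree G + degree H" using FGH nz by (simp add: degree_mult_eq)
  have l: "lead_coeff G * lead_coeff H = 1" using lF FGH by (simp add: lead_coeff_mult)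
  have lg: "\<not> q dvd lead_coeff G" and lh: "\<not> q dvd lead_coeff H"
    using l q by (metis dvd_mult2 not_prime_unit, metis dvd_mult not_prime_unit)
  have c: "poly.coeff G 0 * poly.coeff H 0 = q" using c0 FGH by (simp add: coeff_mult_0)
  have "\<not> (q dvd poly.coeff G 0 \<and> q dvd poly.coeff H 0)"
  proof
    assume "q dvd poly.coeff G 0 \<and> q dvd poly.coeff H 0"
    then have "q * q dvd q" using c by (metis mult_dvd_mono)
    then show False using q by (metis dvd_mult_cancel_left not_prime_0 not_prime_unit mult.right_neutral)
  qed
  moreover have "q dvd poly.coeff G 0 \<or> q dvd poly.coeff H 0" using c q by (metis dvd_refl prime_dvd_mult_iff)
  ultimately show False
  proof (elim disjE)
    assume "q dvd poly.coeff G 0" "\<not> (q dvd poly.coeff G 0 \<and> q dvd poly.coeff H 0)"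
    then show False using eis_aux[OF q FGH _ _ lg _ cF] dF dH by auto
  next
    assume "q dvd poly.coeff H 0" "\<not> (q dvd poly.coeff G 0 \<and> q dvd poly.coeff H 0)"
    then show False using eis_aux[OF q _ _ _ lh _ cF, of G] FGH dF dG by (auto simp: mult.commute)
  qed
qed


lemma cyc_shift:
  fixes p :: nat
  defines "P \<equiv> (\<Sum>k<p. Polynomial.monom 1 k :: int poly)"
  shows "pCons 0 (P \<circ>\<^sub>p [:1,1:]) = [:1,1:]^p - 1"
    and "[:-1,1:] * P = Polynomial.monom 1 p - 1"
proof -
  have ev: "poly P x = (\<Sum>k<p. x ^ k)" for x
    unfolding P_def by (simp add: poly_sum poly_monom)
  show "pCons 0 (P \<circ>\<^sub>p [:1,1:]) = [:1,1:]^p - 1"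
  proof (rule poly_eq_poly_eq_iff[THEN iffD1], rule ext)
    fix x :: int
    have "poly (pCons 0 (P \<circ>\<^sub>p [:1,1:])) x = x * (\<Sum>k<p. (1 + x) ^ k)"
      by (simp add: poly_pcompose ev)
    also have "\<dots> = (1 + x) ^ p - 1" using power_diff_1_eq[of "1+x" p] by simp
    finally show "poly (pCons 0 (P \<circ>\<^sub>p [:1,1:])) x = poly ([:1,1:]^p - 1) x"
      by (simp add: poly_power)
  qed
  show "[:-1,1:] * P = Polynomial.monom 1 p - 1"
  proof (rule poly_eq_poly_eq_iff[THEN iffD1], rule ext)
    fix x :: int
    show "poly ([:-1,1:] * P) x = poly (Polynomial.monom 1 p - 1) x"
      using power_diff_1_eq[of x p] by (simp add: ev poly_monom left_diff_distrib)
  qed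
qed

lemma cyc_irred:
  fixes p :: nat and G H :: "int poly"
  assumes p: "prime p"
    and PGH: "(\<Sum>k<p. Polynomial.monom 1 k :: int poly) = G * H"
    and dG: "degree G \<ge> 1" and dH: "degree H \<ge> 1"
  shows False
proof -
  define P where "P = (\<Sum>k<p. Polynomial.monom 1 k :: int poly)"
  define F where "F = P \<circ>\<^sub>p [:1,1:]"
  have e1: "pCons 0 F = [:1,1:]^p - 1" and e2: "[:-1,1:] * P = Polynomial.monom 1 p - 1"
    using cyc_shift[of p] unfolding P_def F_def by auto
  have p1: "p \<ge> 2" using p prime_ge_2_nat by blast
  have P0: "P \<noteq> 0" using e2 p1 by (auto simp: monom_eq_1_iff)
  have "degree ([:-1,1:] * P) = p" unfolding e2 using p1
    by (subst diff_conv_add_uminus, subst degree_add_eq_left) (auto simp: degree_monom_eq)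
  moreover have "degree ([:-1,1:] * P) = degree [:-1,1::int:] + degree P"
    by (rule degree_mult_eq) (use P0 in auto)
  ultimately have dP: "degree P = p - 1" by simp
  have dF: "degree F = p - 1" unfolding F_def by (simp add: degree_pcompose dP)
  have cF: "poly.coeff F k = int (p choose Suc k)" if "Suc k \<le> p" for k
  proof -
    have "poly.coeff F k = poly.coeff (pCons 0 F) (Suc k)" by simp
    also have "\<dots> = poly.coeff ([:1,1:]^p) (Suc k)" unfolding e1 by simp
    also have "\<dots> = int (p choose Suc k)" using coeff_linear_poly_power[OF that, of 1 1] by simp
    finally show ?thesis .
  qed
  define G1 where "G1 = G \<circ>\<^sub>p [:1,1:]"
  define H1 where "H1 = H \<circ>\<^sub>p [:1,1:]"
  have FGH: "F = G1 * H1" unfolding F_def G1_def H1_def P_def PGH by (simp add: pcompose_mult)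
  show False
  proof (rule eis[OF _ FGH])
    show "prime (int p)" using p by simp
    show "poly.coeff F 0 = int p" using cF[of 0] p1 by simp
    show "lead_coeff F = 1" using cF[of "p - 1"] p1 dF by simp
    show "\<forall>k<degree F. int p dvd poly.coeff F k"
    proof (intro allI impI)
      fix k assume "k < degree F"
      hence "Suc k < p" using dF by simp
      hence "p dvd p choose Suc k" using p by (intro dvd_choose_prime) auto
      thus "int p dvd poly.coeff F k" using cF \<open>Suc k < p\<close> by simp
    qed
    show "degree G1 \<ge> 1" "degree H1 \<ge> 1" using dG dH unfolding G1_def H1_def
      by (simp_all add: degree_pcompose)
  qed
qed

lemma cyc_degree:
  fixes p :: nat assumes p: "prime p"
  shows "degree (\<Sum>k<p. Polynomial.monom 1 k :: int poly) = p - 1"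
proof -
  define P where "P = (\<Sum>k<p. Polynomial.monom 1 k :: int poly)"
  have e2: "[:-1,1:] * P = Polynomial.monom 1 p - 1"
    using cyc_shift[of p] unfolding P_def by auto
  have p1: "p \<ge> 2" using p prime_ge_2_nat by blast
  have P0: "P \<noteq> 0" using e2 p1 by (auto simp: monom_eq_1_iff)
  have "degree ([:-1,1:] * P) = p" unfolding e2 using p1
    by (subst diff_conv_add_uminus, subst degree_add_eq_left) (auto simp: degree_monom_eq)
  moreover have "degree ([:-1,1:] * P) = degree [:-1,1::int:] + degree P"
    by (rule degree_mult_eq) (use P0 in auto)
  ultimately show ?thesis unfolding P_def by simp
qed

lemma map_poly_of_rat_sum:
  "map_poly (of_rat :: rat \<Rightarrow> complex) (sum f A) = (\<Sum>x\<in>A. map_poly of_rat (f x))"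
  by (induction A rule: infinite_finite_induct) (auto simp: of_rat_hom.map_poly_hom_add)

lemma map_poly_of_rat_mult:
  "map_poly (of_rat :: rat \<Rightarrow> complex) (a * b) = map_poly of_rat a * map_poly of_rat b"
proof -
  interpret m: map_poly_comm_ring_hom "of_rat :: rat \<Rightarrow> complex" by unfold_locales
  show ?thesis by (rule m.hom_mult)
qed

lemma omega_facts:
  fixes p :: nat assumes p: "prime p"
  defines "\<omega> \<equiv> cis (2 * pi / real p)"
  shows "\<omega> ^ p = 1" "\<omega> \<noteq> 1" "(\<Sum>k<p. \<omega> ^ k) = 0"
proof -
  have p1: "p \<ge> 2" using p prime_ge_2_nat by blast
  have "\<omega> ^ p = cis (real p * (2 * pi / real p))" unfolding \<omega>_def by (rule Complex.DeMoivre)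
  also have "\<dots> = 1" using p1 by simp
  finally show w1: "\<omega> ^ p = 1" .
  show w2: "\<omega> \<noteq> 1"
  proof
    assume "\<omega> = 1"
    hence "cos (2 * pi / real p) = 1" unfolding \<omega>_def by (metis cis.sel(1) one_complex.sel(1))
    then obtain n :: int where n: "2 * pi / real p = real_of_int n * 2 * pi"
      by (auto simp: cos_one_2pi_int)
    hence "(2 * pi) * (1 / real p) = (2 * pi) * real_of_int n" by (simp add: divide_inverse mult_ac)
    hence "1 / real p = real_of_int n" using pi_gt_zero by (metis mult_left_cancel mult_eq_0_iff pi_neq_zero zero_neq_numeral)
    moreover have "0 < 1 / real p" "1 / real p < 1" using p1 by auto
    ultimately have "0 < n" "n < 1" by simp_all
    then show False by simp
  qed
  have "(\<omega> - 1) * (\<Sum>k<p. \<omega> ^ k) = 0" using power_diff_1_eq[of \<omega> p] w1 by simp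
  thus "(\<Sum>k<p. \<omega> ^ k) = 0" using w2 by simp
qed

lemma cyc_no_small_root:
  fixes p :: nat and f :: "rat poly"
  assumes p: "prime p" and f0: "f \<noteq> 0" and df: "degree f < p - 1"
    and root: "poly (map_poly of_rat f) (cis (2 * pi / real p)) = 0"
  shows False
proof -
  define \<omega> where "\<omega> = cis (2 * pi / real p)"
  define P where "P = (\<Sum>k<p. Polynomial.monom 1 k :: int poly)"
  define \<Phi> where "\<Phi> = (of_int_poly P :: rat poly)"
  have dPhi: "degree \<Phi> = p - 1" unfolding \<Phi>_def P_def using cyc_degree[OF p] by simp
  have Phi_eq: "\<Phi> = (\<Sum>k<p. Polynomial.monom 1 k)" unfolding \<Phi>_def P_def by (simp add: of_int_poly_hom.hom_sum of_int_hom.map_poly_hom_monom)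
  have Phi_root: "poly (map_poly of_rat \<Phi>) \<omega> = 0"
    unfolding Phi_eq using omega_facts(3)[OF p] unfolding \<omega>_def[symmetric]
    by (simp add: map_poly_of_rat_sum poly_sum poly_monom)
  have Phi0: "\<Phi> \<noteq> 0" by (intro notI) (use dPhi prime_ge_2_nat[OF p] in auto)
  define g where "g = gcd f \<Phi>"
  obtain u v where uv: "u * f + v * \<Phi> = g"
    unfolding g_def using bezout_coefficients_fst_snd by blast
  have groot: "poly (map_poly of_rat g) \<omega> = 0"
    unfolding uv[symmetric] using root Phi_root unfolding \<omega>_def
    by (simp add: of_rat_hom.map_poly_hom_add map_poly_of_rat_mult)
  have gf: "g dvd f" and gPhi: "g dvd \<Phi>" unfolding g_def by auto
  have g0: "g \<noteq> 0" using f0 gf by auto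
  have dg: "degree g \<le> degree f" using gf f0 by (rule dvd_imp_degree_le)
  have dg1: "degree g \<noteq> 0"
  proof
    assume "degree g = 0"
    then obtain a where "g = [:a:]" by (metis degree_eq_zeroE)
    with g0 groot show False by simp
  qed
  obtain h where Phigh: "\<Phi> = g * h" using gPhi by blast
  have h0: "h \<noteq> 0" using Phi0 Phigh by auto
  have "degree \<Phi> = degree g + degree h" using Phigh g0 h0 by (simp add: degree_mult_eq)
  hence dh: "degree h \<ge> 1" using dPhi dg df by linarith
  obtain G H where GH: "P = G * H" "degree G = degree g" "degree H = degree h"
    using rat_to_int_factor[of P g h] Phigh unfolding \<Phi>_def by blast
  show False using cyc_irred[OF p, of G H] GH dg1 dh unfolding P_def by simp
qed

lemma cyc_indep:
  fixes p :: nat and c :: "nat \<Rightarrow> rat"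
  assumes p: "prime p"
    and s: "(\<Sum>j<p. of_rat (c j) * cis (2 * pi / real p) ^ j) = (0::complex)"
    and j: "j < p"
  shows "c j = c (p - 1)"
proof -
  define \<omega> where "\<omega> = cis (2 * pi / real p)"
  define d where "d j = c j - c (p - 1)" for j
  define f where "f = (\<Sum>j<p-1. Polynomial.monom (d j) j)"
  have p1: "p \<ge> 2" using p prime_ge_2_nat by blast
  have cf: "poly.coeff f i = (if i < p - 1 then d i else 0)" for i
    unfolding f_def by (simp add: coeff_sum)
  have "degree f \<le> p - 2" by (rule degree_le) (use cf in auto)
  hence df: "degree f < p - 1" using p1 by linarith
  have "poly (map_poly of_rat f) \<omega> = (\<Sum>j<p-1. of_rat (d j) * \<omega> ^ j)"
    unfolding f_def by (simp add: map_poly_of_rat_sum of_rat_hom.map_poly_hom_monom poly_sum poly_monom)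
  also have "\<dots> = (\<Sum>j<p. of_rat (d j) * \<omega> ^ j)"
  proof -
    have "p = Suc (p - 1)" using p1 by simp
    then have "(\<Sum>j<p. of_rat (d j) * \<omega> ^ j) = (\<Sum>j<Suc (p-1). of_rat (d j) * \<omega> ^ j)" by simp
    also have "\<dots> = (\<Sum>j<p-1. of_rat (d j) * \<omega> ^ j)" by (simp add: d_def)
    finally show ?thesis by simp
  qed
  also have "\<dots> = (\<Sum>j<p. of_rat (c j) * \<omega> ^ j) - of_rat (c (p - 1)) * (\<Sum>j<p. \<omega> ^ j)"
    by (simp add: d_def of_rat_diff left_diff_distrib sum_subtractf sum_distrib_left)
  also have "\<dots> = 0" using s omega_facts(3)[OF p] unfolding \<omega>_def by simp
  finally have root: "poly (map_poly of_rat f) (cis (2 * pi / real p)) = 0" unfolding \<omega>_def .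
  have "f = 0"
  proof (rule ccontr)
    assume "f \<noteq> 0"
    then show False using cyc_no_small_root[OF p _ df root] by simp
  qed
  show ?thesis
  proof (cases "j < p - 1")
    case True
    then have "d j = 0" using cf[of j] \<open>f = 0\<close> by simp
    then show ?thesis by (simp add: d_def)
  next
    case False
    then have "j = p - 1" using j by simp
    then show ?thesis by simp
  qed
qed

lemma cos_mod:
  fixes n :: nat and k :: int assumes n: "n > 0"
  shows "cos (2 * real_of_int k * pi / real n) = cos (2 * real (nat (k mod int n)) * pi / real n)"
proof -
  have km: "k = k mod int n + int n * (k div int n)" by simp
  have r: "real (nat (k mod int n)) = real_of_int (k mod int n)" using n by simp
  have "2 * real_of_int k * pi / real n
        = 2 * real_of_int (k mod int n) * pi / real n + (2 * pi) * real_of_int (k div int n)"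
  proof -
    have "real_of_int k = real_of_int (k mod int n) + real n * real_of_int (k div int n)"
      by (metis km of_int_add of_int_mult of_int_of_nat_eq)
    then show ?thesis using n by (simp add: field_simps)
  qed
  then show ?thesis unfolding r by (simp add: cos_add)
qed

lemma sin_sq_mod:
  fixes n :: nat and k :: int assumes n: "n > 0"
  shows "(sin (real_of_int k * pi / real n))^2 = (1 - cos (2 * real (nat (k mod int n)) * pi / real n)) / 2"
proof -
  have "cos (2 * real_of_int k * pi / real n) = 1 - 2 * (sin (real_of_int k * pi / real n))^2"
    using cos_double_sin[of "real_of_int k * pi / real n"] by (metis times_divide_eq_right mult.assoc)
  then show ?thesis using cos_mod[OF n, of k] by simp
qed

lemma omega_pow_sum:
  fixes n a :: nat assumes n: "n > 0" and a: "a \<le> n"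
  shows "cis (2 * pi / real n) ^ a + cis (2 * pi / real n) ^ (n - a)
         = complex_of_real (2 * cos (2 * real a * pi / real n))"
proof -
  define t where "t = 2 * real a * pi / real n"
  have e1: "cis (2 * pi / real n) ^ a = cis t" unfolding t_def Complex.DeMoivre by (simp add: field_simps)
  have "cis (2 * pi / real n) ^ (n - a) = cis (real (n - a) * (2 * pi / real n))" by (rule Complex.DeMoivre)
  also have "real (n - a) * (2 * pi / real n) = 2 * pi + (- t)" unfolding t_def using n a
    by (simp add: of_nat_diff field_simps)
  also have "cis (2 * pi + (- t)) = cis (- t)" by (simp add: complex_eq_iff cos_add sin_add)
  finally have e2: "cis (2 * pi / real n) ^ (n - a) = cis (- t)" .
  show ?thesis unfolding e1 e2 t_def[symmetric] by (simp add: complex_eq_iff)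
qed

lemma of_real_of_rat_complex: "complex_of_real (of_rat q) = of_rat q"
  by (cases q) (simp add: of_rat_rat)

theorem corollary6:
  fixes n :: nat and k1 k2 :: int
  assumes "prime n" and "odd n"
    and "sin (real_of_int k2 * pi / real n) \<noteq> 0"
  shows "sin (real_of_int k1 * pi / real n) / sin (real_of_int k2 * pi / real n) \<in> {-1, 0, 1}
      \<or> sin (real_of_int k1 * pi / real n) / sin (real_of_int k2 * pi / real n) \<notin> \<rat>"
proof (rule disjCI)
  assume "\<not> (sin (real_of_int k1 * pi / real n) / sin (real_of_int k2 * pi / real n) \<notin> \<rat>)"
  then have xQ: "sin (real_of_int k1 * pi / real n) / sin (real_of_int k2 * pi / real n) \<in> \<rat>" by blast
  define s1 where "s1 = sin (real_of_int k1 * pi / real n)"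
  define s2 where "s2 = sin (real_of_int k2 * pi / real n)"
  define x where "x = s1 / s2"
  have p: "prime n" and odd: "odd n" using assms by auto
  have s2: "s2 \<noteq> 0" using assms unfolding s2_def by auto
  from xQ obtain q :: rat where q: "x = of_rat q" unfolding x_def s1_def s2_def by (auto elim: Rats_cases)
  have n2: "n \<ge> 2" using p prime_ge_2_nat by blast
  hence n0: "n > 0" by simp
  define a where "a = nat (k1 mod int n)"
  define b where "b = nat (k2 mod int n)"
  have an: "a < n" and bn: "b < n" unfolding a_def b_def using n0 by (simp_all add: nat_less_iff)
  define C where "C m = cos (2 * real m * pi / real n)" for m :: nat
  have sq1: "s1^2 = (1 - C a) / 2" unfolding s1_def C_def a_def by (rule sin_sq_mod[OF n0])
  have sq2: "s2^2 = (1 - C b) / 2" unfolding s2_def C_def b_def by (rule sin_sq_mod[OF n0])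
  have s1x: "s1 = x * s2" unfolding x_def using s2 by simp
  define R where "R = x^2"
  have rel: "1 - C a = R * (1 - C b)"
  proof -
    have "s1^2 = R * s2^2" unfolding R_def s1x by (simp add: power_mult_distrib)
    then show ?thesis using sq1 sq2 by simp
  qed
  have Cb: "1 - C b \<noteq> 0" using sq2 s2 by auto
  have "x \<in> {-1, 0, 1}"
  proof (cases "s1 = 0")
    case True then show ?thesis unfolding x_def by simp
  next
    case s1: False
    show ?thesis
    proof (cases "C a = C b")
      case True
      then have "R = 1" using rel Cb by simp
      then have "x^2 = 1" unfolding R_def .
      then have "x = 1 \<or> x = -1" by (simp add: power2_eq_1_iff)
      then show ?thesis by auto
    next
      case neq: False
      have C0: "C 0 = 1" unfolding C_def by simp
      have Cnm: "C (n - m) = C m" if "m \<le> n" for m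
      proof -
        have "2 * real (n - m) * pi / real n = 2 * pi - 2 * real m * pi / real n"
          using that n0 by (simp add: of_nat_diff field_simps)
        then show ?thesis unfolding C_def by (simp add: cos_2pi_minus)
      qed
      have a0: "a \<noteq> 0"
      proof
        assume "a = 0"
        then have "s1^2 = 0" using sq1 C0 by simp
        then show False using s1 by simp
      qed
      have b0: "b \<noteq> 0"
      proof
        assume "b = 0"
        then have "s2^2 = 0" using sq2 C0 by simp
        then show False using s2 by simp
      qed
      have ab: "a \<noteq> b" using neq by auto
      have anb: "a \<noteq> n - b" using neq Cnm[of b] bn by auto
      have bna: "b \<noteq> n - a" using anb an bn by auto
      have ana: "a \<noteq> n - a" using odd an by presburger
      have bnb: "b \<noteq> n - b" using odd bn by presburger
      define Q where "Q = q^2"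
      have RQ: "R = of_rat Q" unfolding R_def Q_def q by (simp add: of_rat_power)
      define c where "c j = (if j = 0 then 2 - 2 * Q else 0) - (if j = a then 1 else 0)
          - (if j = n - a then 1 else 0) + (if j = b then Q else 0) + (if j = n - b then Q else 0)" for j
      define \<omega> where "\<omega> = cis (2 * pi / real n)"
      have "(\<Sum>j<n. of_rat (c j) * \<omega> ^ j)
          = of_rat (2 - 2 * Q) - \<omega> ^ a - \<omega> ^ (n - a) + of_rat Q * \<omega> ^ b + of_rat Q * \<omega> ^ (n - b)"
      proof -
        have pt0: "of_rat (c j) * z = (if j = 0 then of_rat (2 - 2 * Q) * z else 0)
           - (if j = a then z else 0) - (if j = n - a then z else 0)
           + (if j = b then of_rat Q * z else 0) + (if j = n - b then of_rat Q * z else 0)" for j and z :: complex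
          unfolding c_def by (simp add: of_rat_add of_rat_diff algebra_simps)
        have pt: "of_rat (c j) * \<omega> ^ j = (if j = 0 then of_rat (2 - 2 * Q) * \<omega> ^ j else 0)
           - (if j = a then \<omega> ^ j else 0) - (if j = n - a then \<omega> ^ j else 0)
           + (if j = b then of_rat Q * \<omega> ^ j else 0) + (if j = n - b then of_rat Q * \<omega> ^ j else 0)" for j
          by (rule pt0)
        show ?thesis unfolding pt using an bn n0 a0 b0
          by (simp add: sum.distrib sum_subtractf sum.delta)
      qed
      also have "\<dots> = of_rat (2 - 2 * Q) - (\<omega> ^ a + \<omega> ^ (n - a)) + of_rat Q * (\<omega> ^ b + \<omega> ^ (n - b))"
        by (simp add: algebra_simps)
      also have "\<dots> = complex_of_real (2 * ((1 - C a) - R * (1 - C b)))"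
        unfolding \<omega>_def omega_pow_sum[OF n0 less_imp_le[OF an]] omega_pow_sum[OF n0 less_imp_le[OF bn]]
        unfolding RQ C_def by (simp add: of_rat_diff of_rat_mult of_real_of_rat_complex algebra_simps)
      also have "\<dots> = 0" using rel by simp
      finally have sum0: "(\<Sum>j<n. of_rat (c j) * cis (2 * pi / real n) ^ j) = (0::complex)"
        unfolding \<omega>_def .
      have "c a = c (n - 1)" by (rule cyc_indep[OF p sum0 an])
      moreover have "c b = c (n - 1)" by (rule cyc_indep[OF p sum0 bn])
      ultimately have "c a = c b" by simp
      moreover have "c a = -1" unfolding c_def using a0 ana ab anb by simp
      moreover have "c b = Q" unfolding c_def using b0 bna ab bnb by simp
      ultimately have "Q = -1" by simp
      moreover have "Q \<ge> 0" unfolding Q_def by simp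
      ultimately show ?thesis by simp
    qed
  qed
  then show "sin (real_of_int k1 * pi / real n) / sin (real_of_int k2 * pi / real n) \<in> {-1, 0, 1}"
    unfolding x_def s1_def s2_def .
qed

end
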